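(* Let $m,n\geq 0$ be integers, and let $U=e^{2\pi i\alpha}$, $V=e^{2\pi i\beta}$ with $0\leq \alpha,\beta<1$ and $\alpha\neq\beta$. Then \[ \frac{2}{(2\pi i)^{m+n+1}}\int_0^1 \frac{dr}{r}\int_0^1 d\phi\, \Big(\operatorname{Li}_m(re^{2\pi i\phi}\bar V)-(-1)^m\,\overline{\operatorname{Li}_m(re^{2\pi i\phi}\bar V)}\Big)\Big(\operatorname{Li}_n(re^{2\pi i\phi}\bar U)+(-1)^n\,\overline{\operatorname{Li}_n(re^{2\pi i\phi}\bar U)}\Big) = -\frac{(-1)^n}{(m+n+1)!}\,B_{m+n+1}\big(\alpha-\beta+H(\beta-\alpha)\big), \] where the integral over $r$ is understood as $\lim_{\lambda\uparrow 1}\int_0^\lambda$. In particular, on each of the regions $\{\alpha<\beta\}$ and $\{\alpha>\beta\}$ this quantity is a polynomial in $\alpha,\beta$ with rational coefficients.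
   Context: For an integer $k\geq 0$, $\operatorname{Li}_k(x)=\sum_{j\geq 1} x^j/j^k$ is the polylogarithm, defined by this series for $|x|<1$ (in the integrand, $|re^{2\pi i\phi}\bar U|=|re^{2\pi i\phi}\bar V|=r<1$). The bar denotes complex conjugation. $B_k$ denotes the $k$-th Bernoulli polynomial (defined by $B_0=1$, $B_k'=kB_{k-1}$, $\int_0^1 B_k=0$ for $k\geq1$). $H$ is the Heaviside function: $H(x)=0$ for $x\leq 0$ and $H(x)=1$ for $x>0$. *)

theory Defs
  imports "HOL-Analysis.Analysis"
begin

text \<open>Polylogarithm Li_k(x) = sum_{j>=1} x^j / j^k (meaningful for |x| < 1).\<close>
definition polylog :: "nat \<Rightarrow> complex \<Rightarrow> complex" where
  "polylog k x = (\<Sum>j. x ^ Suc j / of_nat (Suc j) ^ k)"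

fun bernpoly :: "nat \<Rightarrow> real \<Rightarrow> real" where
  "bernpoly 0 = (\<lambda>x. 1)"
| "bernpoly (Suc k) =
     (THE f. (\<forall>x. (f has_real_derivative (of_nat (Suc k) * bernpoly k x)) (at x))
             \<and> integral {0..1} f = 0)"

definition heaviside :: "real \<Rightarrow> real" where
  "heaviside x = (if x > 0 then 1 else 0)"

end

theory Submission
  imports Defs
begin


declare bernpoly.simps(2)[simp del]

lemma poly_sum_deriv:
  "((\<lambda>x::real. \<Sum>i<d. a i / real (Suc i) * x ^ Suc i) has_real_derivative (\<Sum>i<d. a i * x ^ i)) (at x)"
proof -
  have "((\<lambda>x::real. \<Sum>i<d. a i / real (Suc i) * x ^ Suc i) has_real_derivative
        (\<Sum>i<d. a i / real (Suc i) * (real (Suc i) * x ^ i))) (at x)"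
    by (intro derivative_eq_intros) auto
  also have "(\<Sum>i<d. a i / real (Suc i) * (real (Suc i) * x ^ i)) = (\<Sum>i<d. a i * x ^ i)"
    by (intro sum.cong) auto
  finally show ?thesis .
qed

definition polyrep :: "(real \<Rightarrow> real) \<Rightarrow> bool" where
  "polyrep g \<longleftrightarrow> (\<exists>a d. \<forall>x. g x = (\<Sum>i<d. a i * x ^ i))"

lemma polyrep_cont: "polyrep g \<Longrightarrow> continuous_on A g"
proof -
  assume "polyrep g"
  then obtain a d where "\<forall>x. g x = (\<Sum>i<d. a i * x ^ i)" unfolding polyrep_def by blast
  then have "g = (\<lambda>x. \<Sum>i<d. a i * x ^ i)" by auto
  then show ?thesis by (auto intro!: continuous_intros)
qed

lemma bern_step:
  fixes g :: "real \<Rightarrow> real" and k :: nat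
  assumes "polyrep g"
  shows "\<exists>!f. (\<forall>x. (f has_real_derivative (of_nat (Suc k) * g x)) (at x)) \<and> integral {0..1} f = 0"
    and "polyrep (THE f. (\<forall>x. (f has_real_derivative (of_nat (Suc k) * g x)) (at x)) \<and> integral {0..1} f = 0)"
proof -
  obtain a d where ad: "\<forall>x. g x = (\<Sum>i<d. a i * x ^ i)" using assms unfolding polyrep_def by blast
  define F where "F = (\<lambda>x::real. \<Sum>i<d. real (Suc k) * a i / real (Suc i) * x ^ Suc i)"
  have dF: "(F has_real_derivative (of_nat (Suc k) * g x)) (at x)" for x
  proof -
    have "(F has_real_derivative (\<Sum>i<d. real (Suc k) * a i * x ^ i)) (at x)"
      unfolding F_def using poly_sum_deriv[of "\<lambda>i. real (Suc k) * a i" d x] by simp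
    also have "(\<Sum>i<d. real (Suc k) * a i * x ^ i) = of_nat (Suc k) * g x"
      by (simp add: ad sum_distrib_left mult.assoc)
    finally show ?thesis .
  qed
  have cF: "continuous_on {0..1} F" unfolding F_def by (auto intro!: continuous_intros)
  define C where "C = integral {0..1} F"
  define f0 where "f0 = (\<lambda>x. F x - C)"
  have df0: "(f0 has_real_derivative (of_nat (Suc k) * g x)) (at x)" for x
    unfolding f0_def using dF[of x] by (auto intro!: derivative_eq_intros)
  have if0: "integral {0..1} f0 = 0"
    unfolding f0_def C_def
    by (subst integral_diff) (auto intro!: integrable_continuous_real cF)
  have uniq: "f = f0" if "\<forall>x. (f has_real_derivative (of_nat (Suc k) * g x)) (at x)" "integral {0..1} f = 0" for f
  proof -
    have "\<forall>x. ((\<lambda>x. f x - f0 x) has_real_derivative 0) (at x)"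
      using that(1) df0 by (auto intro!: derivative_eq_intros)
    then have const: "f x - f0 x = f 0 - f0 0" for x by (rule DERIV_isconst_all)
    have cf: "continuous_on {0..1} f"
      using that(1) by (meson DERIV_continuous continuous_at_imp_continuous_on)
    have cf0: "continuous_on {0..1} f0"
      using df0 by (meson DERIV_continuous continuous_at_imp_continuous_on)
    have "integral {0..1} (\<lambda>x. f x - f0 x) = 0"
      using that(2) if0 by (subst integral_diff) (auto intro!: integrable_continuous_real cf cf0)
    also have "integral {0..1} (\<lambda>x. f x - f0 x) = f 0 - f0 0"
      by (subst const) simp
    finally have "f 0 - f0 0 = 0" .
    then show ?thesis using const by (intro ext) (simp add: algebra_simps)
  qed
  show eu: "\<exists>!f. (\<forall>x. (f has_real_derivative (of_nat (Suc k) * g x)) (at x)) \<and> integral {0..1} f = 0"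
  proof (rule ex1I[of _ f0])
    show "(\<forall>x. (f0 has_real_derivative (of_nat (Suc k) * g x)) (at x)) \<and> integral {0..1} f0 = 0"
      using df0 if0 by simp
  next
    fix f assume "(\<forall>x. (f has_real_derivative (of_nat (Suc k) * g x)) (at x)) \<and> integral {0..1} f = 0"
    then show "f = f0" using uniq by simp
  qed
  have "(THE f. (\<forall>x. (f has_real_derivative (of_nat (Suc k) * g x)) (at x)) \<and> integral {0..1} f = 0) = f0"
    using uniq df0 if0 by (intro the_equality) auto
  moreover have "polyrep f0"
  proof -
    define b where "b = (\<lambda>i. if i = 0 then - C else real (Suc k) * a (i - 1) / real i)"
    have "f0 x = (\<Sum>i<Suc d. b i * x ^ i)" for x
      unfolding f0_def F_def b_def by (subst sum.lessThan_Suc_shift) auto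
    then show ?thesis unfolding polyrep_def by blast
  qed
  ultimately show "polyrep (THE f. (\<forall>x. (f has_real_derivative (of_nat (Suc k) * g x)) (at x)) \<and> integral {0..1} f = 0)"
    by simp
qed

lemma bern_polyrep: "polyrep (bernpoly k)"
proof (induction k)
  case 0
  show ?case unfolding polyrep_def by (rule exI[of _ "\<lambda>_. 1"], rule exI[of _ 1]) simp
next
  case (Suc k)
  then show ?case unfolding bernpoly.simps(2) using bern_step(2)[OF Suc] by simp
qed

lemma bern_deriv: "(bernpoly (Suc k) has_real_derivative (of_nat (Suc k) * bernpoly k x)) (at x)"
  and bern_int: "integral {0..1} (bernpoly (Suc k)) = 0"
proof -
  have "(\<forall>x. (bernpoly (Suc k) has_real_derivative (of_nat (Suc k) * bernpoly k x)) (at x)) \<and> integral {0..1} (bernpoly (Suc k)) = 0"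
    unfolding bernpoly.simps(2) by (rule theI'[OF bern_step(1)[OF bern_polyrep]])
  then show "(bernpoly (Suc k) has_real_derivative (of_nat (Suc k) * bernpoly k x)) (at x)"
    "integral {0..1} (bernpoly (Suc k)) = 0" by auto
qed

lemma bern_cont: "continuous_on A (bernpoly k)"
  by (rule polyrep_cont[OF bern_polyrep])

lemma bern1: "bernpoly 1 x = x - 1/2"
proof -
  have "bernpoly 1 = (\<lambda>x. x - 1/2)"
  proof -
    have "(\<forall>x. ((\<lambda>x. x - 1/2) has_real_derivative (of_nat (Suc 0) * bernpoly 0 x)) (at x)) \<and> integral {0..1} (\<lambda>x::real. x - 1/2) = 0"
    proof
      show "\<forall>x. ((\<lambda>x. x - 1/2) has_real_derivative (of_nat (Suc 0) * bernpoly 0 x)) (at x)"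
        by (auto intro!: derivative_eq_intros)
      have "((\<lambda>x::real. x - 1/2) has_integral (1/2 - 1/2)) {0..1}"
        using has_integral_diff[OF ident_has_integral[of 0 1] has_integral_const_real[of "1/2" 0 1]]
        by simp
      then show "integral {0..1} (\<lambda>x::real. x - 1/2) = 0" by (simp add: integral_unique)
    qed
    moreover have "(\<forall>x. (bernpoly 1 has_real_derivative (of_nat (Suc 0) * bernpoly 0 x)) (at x)) \<and> integral {0..1} (bernpoly 1) = 0"
      using bern_deriv[of 0] bern_int[of 0] by simp
    ultimately show ?thesis
      using bern_step(1)[OF bern_polyrep, of 0 0] by (elim ex1E) (metis (no_types, lifting))
  qed
  then show ?thesis by simp
qed



definition ee :: "real \<Rightarrow> complex" where
  "ee t = exp (2 * of_real pi * \<i> * of_real t)"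

lemma ee_add: "ee (a + b) = ee a * ee b"
  unfolding ee_def by (simp add: distrib_left exp_add[symmetric])

lemma ee_int: "ee (of_int k) = 1"
proof -
  have "ee (of_int k) = exp ((2 * of_int k * pi) * \<i>)" unfolding ee_def by (simp add: mult_ac)
  also have "\<dots> = 1" by (rule exp_integer_2pi) simp
  finally show ?thesis .
qed

lemma ee_1: "ee 1 = 1" using ee_int[of 1] by simp
lemma ee_0: "ee 0 = 1" by (simp add: ee_def)

lemma ee_pow: "ee t ^ n = ee (of_nat n * t)"
  unfolding ee_def exp_of_nat_mult[symmetric] by (simp add: mult_ac)

lemma norm_ee [simp]: "norm (ee t) = 1"
  unfolding ee_def by (simp add: norm_exp_eq_Re)

lemma cnj_ee: "cnj (ee t) = ee (- t)"
  unfolding ee_def by (simp add: exp_cnj)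

lemma ee_neq0 [simp]: "ee t \<noteq> 0" unfolding ee_def by simp

lemma ee_deriv:
  "((\<lambda>t. ee (p * t + c)) has_vector_derivative (2 * of_real pi * \<i> * of_real p * ee (p * t + c))) (at t within S)"
proof -
  have "((\<lambda>z. exp (2 * of_real pi * \<i> * (of_real p * z + of_real c))) has_field_derivative
      (2 * of_real pi * \<i> * of_real p * exp (2 * of_real pi * \<i> * (of_real p * of_real t + of_real c)))) (at (of_real t))"
    by (rule derivative_eq_intros refl | simp)+
  from has_vector_derivative_real_field[OF this, of S]
  show ?thesis unfolding ee_def by simp
qed

lemma cont_ee [continuous_intros]: "continuous_on S f \<Longrightarrow> continuous_on S (\<lambda>x. ee (f x))"
  unfolding ee_def by (auto intro!: continuous_intros)

lemma ee_has_integral: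
  fixes p :: int
  shows "((\<lambda>t. ee (of_int p * t)) has_integral (if p = 0 then 1 else 0)) {0..1}"
proof (cases "p = 0")
  case True
  then show ?thesis using has_integral_const_real[of "1::complex" 0 1] by (simp add: ee_0)
next
  case False
  define F where "F = (\<lambda>t. ee (of_int p * t + 0) / (2 * of_real pi * \<i> * of_real (of_int p)))"
  have "(F has_vector_derivative ee (of_int p * t)) (at t within {0..1})" for t
  proof -
    have "((\<lambda>t. ee (of_int p * t + 0) / (2 * of_real pi * \<i> * of_real (of_int p))) has_vector_derivative
       (2 * of_real pi * \<i> * of_real (of_int p) * ee (of_int p * t + 0)) / (2 * of_real pi * \<i> * of_real (of_int p))) (at t within {0..1})"
      using ee_deriv[of "of_int p" 0 t "{0..1}"] by (rule has_vector_derivative_divide)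
    then show ?thesis unfolding F_def using False by simp
  qed
  then have "((\<lambda>t. ee (of_int p * t)) has_integral (F 1 - F 0)) {0..1}"
    by (intro fundamental_theorem_of_calculus) auto
  moreover have "F 1 - F 0 = 0" unfolding F_def by (simp add: ee_int ee_0)
  ultimately show ?thesis using False by simp
qed

lemma ee_prod_integral:
  fixes J K :: nat and a1 a2 b1 b2 :: complex
  assumes "J > 0" "K > 0"
  shows "((\<lambda>t. (a1 * ee (real J * t) + a2 * ee (- real J * t)) * (b1 * ee (real K * t) + b2 * ee (- real K * t)))
     has_integral (if J = K then a1 * b2 + a2 * b1 else 0)) {0..1}"
proof -
  have eq: "(a1 * ee (real J * t) + a2 * ee (- real J * t)) * (b1 * ee (real K * t) + b2 * ee (- real K * t))
     = a1 * b1 * ee (of_int (int J + int K) * t) + a1 * b2 * ee (of_int (int J - int K) * t)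
       + a2 * b1 * ee (of_int (int K - int J) * t) + a2 * b2 * ee (of_int (- int J - int K) * t)" for t
  proof -
    have "ee (of_int (int J + int K) * t) = ee (real J * t) * ee (real K * t)"
      by (simp add: ee_add[symmetric] algebra_simps)
    moreover have "ee (of_int (int J - int K) * t) = ee (real J * t) * ee (- real K * t)"
      by (simp add: ee_add[symmetric] algebra_simps)
    moreover have "ee (of_int (int K - int J) * t) = ee (- real J * t) * ee (real K * t)"
      by (simp add: ee_add[symmetric] algebra_simps)
    moreover have "ee (of_int (- int J - int K) * t) = ee (- real J * t) * ee (- real K * t)"
      by (simp add: ee_add[symmetric] algebra_simps)
    ultimately show ?thesis by (simp add: algebra_simps)
  qed
  have "((\<lambda>t. a1 * b1 * ee (of_int (int J + int K) * t) + a1 * b2 * ee (of_int (int J - int K) * t)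
       + a2 * b1 * ee (of_int (int K - int J) * t) + a2 * b2 * ee (of_int (- int J - int K) * t)) has_integral
      (a1 * b1 * (if int J + int K = 0 then 1 else 0) + a1 * b2 * (if int J - int K = 0 then 1 else 0)
       + a2 * b1 * (if int K - int J = 0 then 1 else 0) + a2 * b2 * (if - int J - int K = 0 then 1 else 0))) {0..1}"
    by (intro has_integral_add has_integral_mult_right ee_has_integral)
  also have "(a1 * b1 * (if int J + int K = 0 then 1 else 0) + a1 * b2 * (if int J - int K = 0 then 1 else 0)
       + a2 * b1 * (if int K - int J = 0 then 1 else 0) + a2 * b2 * (if - int J - int K = 0 then 1 else 0))
      = (if J = K then a1 * b2 + a2 * b1 else 0)"
    using assms by auto
  finally show ?thesis unfolding eq .
qed

lemma series_integral:
  fixes g :: "nat \<Rightarrow> real \<Rightarrow> complex"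
  assumes c: "\<And>j. continuous_on {a..b} (g j)"
    and b: "\<And>j x. x \<in> {a..b} \<Longrightarrow> norm (g j x) \<le> M j"
    and s: "summable M"
  shows "(\<lambda>x. \<Sum>j. g j x) integrable_on {a..b}"
    "(\<lambda>j. integral {a..b} (g j)) sums integral {a..b} (\<lambda>x. \<Sum>j. g j x)"
proof -
  have u: "uniform_limit {a..b} (\<lambda>n x. \<Sum>i<n. g i x) (\<lambda>x. \<Sum>i. g i x) sequentially"
    by (rule Weierstrass_m_test[OF b s])
  obtain I J where I: "\<And>n. ((\<lambda>x. \<Sum>i<n. g i x) has_integral I n) {a..b}"
    and J: "((\<lambda>x. \<Sum>i. g i x) has_integral J) {a..b}" and IJ: "I \<longlonglongrightarrow> J"
    by (rule uniform_limit_integral[OF u]) (auto intro!: continuous_intros c)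
  show "(\<lambda>x. \<Sum>j. g j x) integrable_on {a..b}" using J by blast
  have "I n = (\<Sum>i<n. integral {a..b} (g i))" for n
  proof -
    have "((\<lambda>x. \<Sum>i<n. g i x) has_integral (\<Sum>i<n. integral {a..b} (g i))) {a..b}"
      by (intro has_integral_sum) (auto intro!: integrable_integral integrable_continuous_real c)
    then show ?thesis using I[of n] by (rule has_integral_unique[symmetric])
  qed
  then have "I = (\<lambda>n. \<Sum>i<n. integral {a..b} (g i))" by (rule ext)
  then show "(\<lambda>j. integral {a..b} (g j)) sums integral {a..b} (\<lambda>x. \<Sum>j. g j x)"
    unfolding sums_def using IJ J by (simp add: integral_unique)
qed



lemma div_le_self': "0 \<le> (x::real) \<Longrightarrow> 1 \<le> y \<Longrightarrow> x / y \<le> x"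
  using mult_left_mono[of 1 y x] by (simp add: divide_le_eq)

lemma pl_term_bound: "norm (z ^ Suc j / of_nat (Suc j) ^ k :: complex) \<le> norm z ^ Suc j"
proof -
  have "norm (z ^ Suc j / of_nat (Suc j) ^ k :: complex) = norm z ^ Suc j / real (Suc j) ^ k"
    by (simp add: norm_divide norm_power del: of_nat_Suc power_Suc)
  also have "\<dots> \<le> norm z ^ Suc j"
    by (rule div_le_self') (auto simp del: of_nat_Suc power_Suc)
  finally show ?thesis .
qed

lemma pl_summable: "norm z < 1 \<Longrightarrow> summable (\<lambda>j. z ^ Suc j / of_nat (Suc j) ^ k :: complex)"
proof -
  assume z: "norm z < 1"
  have "summable (\<lambda>j. norm z ^ Suc j)"
    using summable_geometric[of "norm z"] z by (simp add: summable_Suc_iff)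
  then show ?thesis
    by (rule summable_comparison_test[rotated]) (use pl_term_bound in auto)
qed

lemma pl_sums: "norm z < 1 \<Longrightarrow> (\<lambda>j. z ^ Suc j / of_nat (Suc j) ^ k) sums polylog k z"
  unfolding polylog_def by (rule summable_sums[OF pl_summable])

definition pc :: "nat \<Rightarrow> nat \<Rightarrow> complex" where
  "pc k n = (if n = 0 then 0 else 1 / of_nat n ^ k)"

lemma pc_sums: "norm z < 1 \<Longrightarrow> (\<lambda>n. pc k n * z ^ n) sums polylog k z"
proof -
  assume z: "norm z < 1"
  have "(\<lambda>n. pc k (Suc n) * z ^ Suc n) sums polylog k z"
    using pl_sums[OF z, of k] by (simp add: pc_def del: of_nat_Suc power_Suc)
  then show ?thesis using sums_Suc_iff[of "\<lambda>n. pc k n * z ^ n"] by (simp add: pc_def)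
qed

lemma polylog_pc: "norm z < 1 \<Longrightarrow> polylog k z = (\<Sum>n. pc k n * z ^ n)"
  using pc_sums sums_unique by blast

definition PD :: "nat \<Rightarrow> complex \<Rightarrow> complex" where
  "PD k z = (\<Sum>n. diffs (pc k) n * z ^ n)"

lemma polylog_deriv:
  assumes "norm z < 1"
  shows "(polylog k has_field_derivative PD k z) (at z)"
proof -
  have "((\<lambda>z. \<Sum>n. pc k n * z ^ n) has_field_derivative PD k z) (at z)"
    unfolding PD_def
    by (rule termdiffs_strong'[of 1]) (use assms pc_sums sums_summable in auto)
  then show ?thesis
    by (rule has_field_derivative_transform_within_open[of _ _ _ "ball 0 1"]) (use assms polylog_pc in auto)
qed

lemma PD_Suc: "norm w < 1 \<Longrightarrow> w * PD (Suc k) w = polylog k w"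
proof -
  assume w: "norm w < 1"
  have d: "diffs (pc (Suc k)) n = 1 / of_nat (Suc n) ^ k" for n
    unfolding diffs_def pc_def by (simp del: of_nat_Suc add: field_simps)
  have "summable (\<lambda>n. w ^ n / of_nat (Suc n) ^ k)"
  proof -
    have sg: "summable (\<lambda>n. norm w ^ n)" using w by (simp add: summable_geometric)
    have bnd: "norm (w ^ n / of_nat (Suc n) ^ k) \<le> norm w ^ n" for n
    proof -
      have "norm (w ^ n / of_nat (Suc n) ^ k) = norm w ^ n / real (Suc n) ^ k"
        by (simp add: norm_divide norm_power del: of_nat_Suc)
      also have "\<dots> \<le> norm w ^ n" by (rule div_le_self') (auto simp del: of_nat_Suc)
      finally show ?thesis .
    qed
    show ?thesis by (rule summable_comparison_test'[OF sg bnd])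
  qed
  then have "w * PD (Suc k) w = (\<Sum>n. w * (w ^ n / of_nat (Suc n) ^ k))"
    unfolding PD_def d by (simp add: suminf_mult[symmetric] del: of_nat_Suc)
  also have "\<dots> = polylog k w" unfolding polylog_def by (simp add: mult.assoc)
  finally show ?thesis .
qed

lemma polylog_isCont: "norm z < 1 \<Longrightarrow> isCont (polylog k) z"
  using polylog_deriv DERIV_isCont by blast

lemma polylog_cont [continuous_intros]:
  assumes "continuous_on S f" "\<And>x. x \<in> S \<Longrightarrow> norm (f x) < 1"
  shows "continuous_on S (\<lambda>x. polylog k (f x))"
proof -
  have "continuous_on (ball 0 1) (polylog k)"
    by (intro continuous_at_imp_continuous_on ballI polylog_isCont) auto
  then show ?thesis using assms
    by (intro continuous_on_compose2[of "ball 0 1" "polylog k" S f]) auto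
qed

lemma polylog_cnj: "norm z < 1 \<Longrightarrow> cnj (polylog k z) = polylog k (cnj z)"
proof -
  assume "norm z < 1"
  from pl_sums[OF this, of k] have "(\<lambda>j. cnj (z ^ Suc j / of_nat (Suc j) ^ k)) sums cnj (polylog k z)"
    by (simp only: sums_cnj)
  then have "(\<lambda>j. cnj z ^ Suc j / of_nat (Suc j) ^ k) sums cnj (polylog k z)" by simp
  moreover have "(\<lambda>j. cnj z ^ Suc j / of_nat (Suc j) ^ k) sums polylog k (cnj z)"
    using \<open>norm z < 1\<close> by (intro pl_sums) simp
  ultimately show ?thesis using sums_unique2 by blast
qed

lemma polylog_chain:
  fixes s p y :: real
  assumes "0 \<le> s" "s < 1"
  shows "((\<lambda>y. polylog (Suc k) (of_real s * ee (p * y))) has_vector_derivative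
           (2 * of_real pi * \<i> * of_real p * polylog k (of_real s * ee (p * y)))) (at y within S)"
proof -
  have f: "((\<lambda>y. of_real s * ee (p * y + 0)) has_vector_derivative
           (of_real s * (2 * of_real pi * \<i> * of_real p * ee (p * y + 0)))) (at y within S)"
    by (intro has_vector_derivative_mult_right ee_deriv)
  have w: "norm (of_real s * ee (p * y)) < 1" using assms by (simp add: norm_mult)
  have g: "(polylog (Suc k) has_field_derivative PD (Suc k) (of_real s * ee (p * y)))
              (at (of_real s * ee (p * y + 0)) within (\<lambda>y. of_real s * ee (p * y + 0)) ` S)"
    using polylog_deriv[OF w] by (simp add: has_field_derivative_at_within)
  from field_vector_diff_chain_within[OF f g]
  have "((\<lambda>y. polylog (Suc k) (of_real s * ee (p * y))) has_vector_derivative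
        (of_real s * (2 * of_real pi * \<i> * of_real p * ee (p * y))) * PD (Suc k) (of_real s * ee (p * y))) (at y within S)"
    by (simp add: o_def)
  also have "(of_real s * (2 * of_real pi * \<i> * of_real p * ee (p * y))) * PD (Suc k) (of_real s * ee (p * y))
      = 2 * of_real pi * \<i> * of_real p * ((of_real s * ee (p * y)) * PD (Suc k) (of_real s * ee (p * y)))"
    by (simp add: mult_ac)
  also have "\<dots> = 2 * of_real pi * \<i> * of_real p * polylog k (of_real s * ee (p * y))"
    by (simp add: PD_Suc[OF w])
  finally show ?thesis .
qed

lemma polylog_1: "norm w < 1 \<Longrightarrow> polylog 1 w = - Ln (1 - w)"
proof -
  assume w: "norm w < 1"
  have "(\<lambda>n. - ((- (- w)) ^ n) / of_nat n) sums Ln (1 + - w)"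
    by (rule Ln_series') (use w in simp)
  then have "(\<lambda>n. - (w ^ n) / of_nat n) sums Ln (1 - w)" by simp
  then have "(\<lambda>n. - (w ^ Suc n) / of_nat (Suc n)) sums Ln (1 - w)"
    using sums_Suc_iff[of "\<lambda>n. - (w ^ n) / of_nat n"] by simp
  then have "(\<lambda>n. w ^ Suc n / of_nat (Suc n) ^ 1) sums - Ln (1 - w)"
    using sums_minus by fastforce
  then show ?thesis using pl_sums[OF w, of 1] sums_unique2 by blast
qed



definition Q :: "nat \<Rightarrow> real \<Rightarrow> real \<Rightarrow> complex" where
  "Q N s y = polylog N (of_real s * ee y) + (-1) ^ N * polylog N (of_real s * ee (- y))"

definition cc :: "nat \<Rightarrow> complex" where
  "cc N = - (((2::complex) * of_real pi * \<i>) ^ N) / of_nat (fact N)"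

definition R :: "nat \<Rightarrow> real \<Rightarrow> real \<Rightarrow> complex" where
  "R N s y = Q N s y - cc N * of_real (bernpoly N y)"

lemma cc_Suc: "cc (Suc N) * of_nat (Suc N) = 2 * of_real pi * \<i> * cc N"
proof -
  have f: "(of_nat (fact N) :: complex) \<noteq> 0" by simp
  have "cc (Suc N) * of_nat (Suc N) = - (((2::complex) * of_real pi * \<i>) ^ Suc N) / (of_nat (Suc N) * of_nat (fact N)) * of_nat (Suc N)"
    unfolding cc_def by (simp only: fact_Suc of_nat_mult of_nat_id)
  also have "\<dots> = 2 * of_real pi * \<i> * cc N"
    unfolding cc_def using f by (simp only: power_Suc) (simp add: field_simps del: of_nat_Suc)
  finally show ?thesis .
qed

lemma DQ:
  assumes "0 \<le> s" "s < 1"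
  shows "(Q (Suc N) s has_vector_derivative (2 * of_real pi * \<i> * Q N s y)) (at y within S)"
proof -
  have a: "((\<lambda>y. polylog (Suc N) (of_real s * ee (1 * y))) has_vector_derivative
           (2 * of_real pi * \<i> * of_real 1 * polylog N (of_real s * ee (1 * y)))) (at y within S)"
    by (rule polylog_chain[OF assms])
  have b: "((\<lambda>y. polylog (Suc N) (of_real s * ee (-1 * y))) has_vector_derivative
           (2 * of_real pi * \<i> * of_real (-1) * polylog N (of_real s * ee (-1 * y)))) (at y within S)"
    by (rule polylog_chain[OF assms])
  have "((\<lambda>y. polylog (Suc N) (of_real s * ee (1 * y)) + (-1) ^ Suc N * polylog (Suc N) (of_real s * ee (-1 * y)))
     has_vector_derivative
     (2 * of_real pi * \<i> * of_real 1 * polylog N (of_real s * ee (1 * y)) +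
      (-1) ^ Suc N * (2 * of_real pi * \<i> * of_real (-1) * polylog N (of_real s * ee (-1 * y))))) (at y within S)"
    by (intro has_vector_derivative_add has_vector_derivative_mult_right a b)
  then show ?thesis unfolding Q_def by (simp add: algebra_simps)
qed

lemma DB: "((\<lambda>y. cc (Suc N) * of_real (bernpoly (Suc N) y)) has_vector_derivative
            (2 * of_real pi * \<i> * (cc N * of_real (bernpoly N y)))) (at y within S)"
proof -
  have "((\<lambda>y. of_real (bernpoly (Suc N) y) :: complex) has_vector_derivative
          of_real (of_nat (Suc N) * bernpoly N y)) (at y within S)"
    by (rule has_vector_derivative_of_real) (rule has_field_derivative_at_within[OF bern_deriv])
  from has_vector_derivative_mult_right[OF this, of "cc (Suc N)"]
  show ?thesis using cc_Suc[of N] by (simp add: mult_ac del: of_nat_Suc) (simp add: mult.assoc[symmetric])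
qed

lemma DR:
  assumes "0 \<le> s" "s < 1"
  shows "(R (Suc N) s has_vector_derivative (2 * of_real pi * \<i> * R N s y)) (at y within S)"
  unfolding R_def[abs_def]
  using has_vector_derivative_diff[OF DQ[OF assms] DB] by (simp add: algebra_simps)

lemma cont_R:
  assumes "0 \<le> s" "s < 1"
  shows "continuous_on S (R N s)"
proof -
  have "continuous_on S (Q N s)"
    unfolding Q_def[abs_def] using assms
    by (intro continuous_intros) (auto simp: norm_mult)
  then show ?thesis unfolding R_def[abs_def]
    by (intro continuous_intros bern_cont)
qed

lemma bern_per: "bernpoly (Suc (Suc k)) 1 = bernpoly (Suc (Suc k)) 0"
proof -
  have "((\<lambda>x. of_nat (Suc (Suc k)) * bernpoly (Suc k) x) has_integral
       (bernpoly (Suc (Suc k)) 1 - bernpoly (Suc (Suc k)) 0)) {0..1}"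
  proof (rule fundamental_theorem_of_calculus)
    fix x show "(bernpoly (Suc (Suc k)) has_vector_derivative (of_nat (Suc (Suc k)) * bernpoly (Suc k) x)) (at x within {0..1})"
      by (meson bern_deriv has_field_derivative_at_within has_real_derivative_iff_has_vector_derivative)
  qed simp
  moreover have "((\<lambda>x. of_nat (Suc (Suc k)) * bernpoly (Suc k) x) has_integral 0) {0..1}"
  proof -
    have "(bernpoly (Suc k) has_integral integral {0..1} (bernpoly (Suc k))) {0..1}"
      by (rule integrable_integral[OF integrable_continuous_real[OF bern_cont]])
    then have "(bernpoly (Suc k) has_integral 0) {0..1}" by (simp add: bern_int)
    from has_integral_mult_right[OF this, of "of_nat (Suc (Suc k))"] show ?thesis by simp
  qed
  ultimately have "bernpoly (Suc (Suc k)) 1 - bernpoly (Suc (Suc k)) 0 = 0" by (rule has_integral_unique)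
  then show ?thesis by simp
qed

lemma ZR:
  assumes "0 \<le> s" "s < 1"
  shows "integral {0..1} (R (Suc N) s) = 0"
proof -
  have "((\<lambda>y. 2 * of_real pi * \<i> * R (Suc N) s y) has_integral
        (R (Suc (Suc N)) s 1 - R (Suc (Suc N)) s 0)) {0..1}"
    by (intro fundamental_theorem_of_calculus DR assms) auto
  moreover have "R (Suc (Suc N)) s 1 - R (Suc (Suc N)) s 0 = 0"
    unfolding R_def Q_def using ee_int[of 1] ee_int[of "-1"] ee_0
    by (simp add: bern_per)
  ultimately have "((\<lambda>y. 2 * of_real pi * \<i> * R (Suc N) s y) has_integral 0) {0..1}" by simp
  from has_integral_mult_right[OF this, of "1 / (2 * of_real pi * \<i>)"]
  have "((\<lambda>y. (1 / (2 * of_real pi * \<i>)) * (2 * of_real pi * \<i> * R (Suc N) s y)) has_integral 0) {0..1}"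
    by simp
  then have "(R (Suc N) s has_integral 0) {0..1}" by simp
  then show ?thesis by (rule integral_unique)
qed

lemma step_bound:
  assumes s: "0 \<le> s" "s < 1" and y: "y \<in> {0..1}"
  shows "norm (R (Suc N) s y) \<le> 4 * pi * integral {0..1} (\<lambda>u. norm (R N s u))"
proof -
  define E where "E = integral {0..1} (\<lambda>u. norm (R N s u))"
  have cN: "continuous_on {0..1} (R N s)" by (rule cont_R[OF s])
  have cS: "continuous_on {0..1} (R (Suc N) s)" by (rule cont_R[OF s])
  have E0: "0 \<le> E" unfolding E_def
    by (rule Henstock_Kurzweil_Integration.integral_nonneg) (auto intro!: integrable_continuous_real continuous_intros cN)
  have Dbound: "norm (R (Suc N) s x - R (Suc N) s 0) \<le> 2 * pi * E" if x: "x \<in> {0..1}" for x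
  proof -
    have "((\<lambda>u. 2 * of_real pi * \<i> * R N s u) has_integral (R (Suc N) s x - R (Suc N) s 0)) {0..x}"
      using x by (intro fundamental_theorem_of_calculus DR s) auto
    then have "R (Suc N) s x - R (Suc N) s 0 = integral {0..x} (\<lambda>u. 2 * of_real pi * \<i> * R N s u)"
      by (rule integral_unique[symmetric])
    also have "norm \<dots> \<le> integral {0..x} (\<lambda>u. norm (2 * of_real pi * \<i> * R N s u))"
      using x by (intro integral_norm_bound_integral)
         (auto intro!: integrable_continuous_real continuous_intros continuous_on_subset[OF cN])
    also have "\<dots> = integral {0..x} (\<lambda>u. 2 * pi * norm (R N s u))"
      by (simp add: norm_mult)
    also have "\<dots> = 2 * pi * integral {0..x} (\<lambda>u. norm (R N s u))"
      by simp
    also have "integral {0..x} (\<lambda>u. norm (R N s u)) \<le> E"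
      unfolding E_def using x
      by (intro integral_subset_le) (auto intro!: integrable_continuous_real continuous_intros continuous_on_subset[OF cN])
    then have "2 * pi * integral {0..x} (\<lambda>u. norm (R N s u)) \<le> 2 * pi * E" by simp
    finally show ?thesis .
  qed
  have "((\<lambda>x. R (Suc N) s x - R (Suc N) s 0) has_integral (0 - R (Suc N) s 0)) {0..1}"
  proof -
    have "(R (Suc N) s has_integral 0) {0..1}"
      using integrable_integral[OF integrable_continuous_real[OF cS]] ZR[OF s] by simp
    moreover have "((\<lambda>x::real. R (Suc N) s 0) has_integral integral {0..1::real} (\<lambda>x. R (Suc N) s 0)) {0..1}"
      by (rule integrable_integral) (rule integrable_const_ivl)
    then have "((\<lambda>x::real. R (Suc N) s 0) has_integral R (Suc N) s 0) {0..1::real}" by simp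
    ultimately show ?thesis by (rule has_integral_diff)
  qed
  then have "norm (R (Suc N) s 0) = norm (integral {0..1} (\<lambda>x. R (Suc N) s x - R (Suc N) s 0))"
    by (simp add: integral_unique)
  also have "\<dots> \<le> integral {0..1} (\<lambda>x::real. 2 * pi * E)"
    by (intro integral_norm_bound_integral Dbound)
       (auto intro!: integrable_continuous_real continuous_intros cS)
  also have "\<dots> = 2 * pi * E" by simp
  finally have "norm (R (Suc N) s 0) \<le> 2 * pi * E" .
  moreover have "norm (R (Suc N) s y) \<le> norm (R (Suc N) s y - R (Suc N) s 0) + norm (R (Suc N) s 0)"
    using norm_triangle_ineq[of "R (Suc N) s y - R (Suc N) s 0" "R (Suc N) s 0"] by simp
  ultimately show ?thesis using Dbound[OF y] unfolding E_def by simp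
qed



lemma Re_ee: "Re (ee y) = cos (2 * pi * y)" and Im_ee: "Im (ee y) = sin (2 * pi * y)"
  unfolding ee_def by (simp_all add: Re_exp Im_exp mult_ac)

lemma one_minus_ee_exp:
  assumes y: "0 < y" "y < 1"
  shows "1 - ee y = exp (of_real (ln (2 * sin (pi * y))) + \<i> * of_real (pi * y - pi / 2))"
proof -
  have sp: "sin (pi * y) > 0" using y by (intro sin_gt_zero) auto
  have c2: "cos (2 * pi * y) = 1 - 2 * sin (pi * y) ^ 2"
    using cos_double_sin[of "pi * y"] by (simp add: mult_ac)
  have s2: "sin (2 * pi * y) = 2 * sin (pi * y) * cos (pi * y)"
    using sin_double[of "pi * y"] by (simp add: mult_ac)
  have cm: "cos (pi * y - pi / 2) = sin (pi * y)" by (simp add: cos_diff)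
  have sm: "sin (pi * y - pi / 2) = - cos (pi * y)" by (simp add: sin_diff)
  show ?thesis
  proof (rule complex_eqI)
    show "Re (1 - ee y) = Re (exp (of_real (ln (2 * sin (pi * y))) + \<i> * of_real (pi * y - pi / 2)))"
      using sp by (simp add: Re_exp Re_ee c2 cm power2_eq_square)
    show "Im (1 - ee y) = Im (exp (of_real (ln (2 * sin (pi * y))) + \<i> * of_real (pi * y - pi / 2)))"
      using sp by (simp add: Im_exp Im_ee s2 sm)
  qed
qed

lemma Ln_one_minus_ee:
  assumes y: "0 < y" "y < 1"
  shows "Ln (1 - ee y) = of_real (ln (2 * sin (pi * y))) + \<i> * of_real (pi * y - pi / 2)"
    and "Ln (1 - ee (- y)) = of_real (ln (2 * sin (pi * y))) - \<i> * of_real (pi * y - pi / 2)"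
proof -
  have py: "pi * y > 0" "pi * y < pi" using y by auto
  have b: "- pi < pi * y - pi / 2" "pi * y - pi / 2 \<le> pi" using py by linarith+
  show "Ln (1 - ee y) = of_real (ln (2 * sin (pi * y))) + \<i> * of_real (pi * y - pi / 2)"
    unfolding one_minus_ee_exp[OF y] using b by (intro Ln_exp) simp_all
  have "1 - ee (- y) = cnj (1 - ee y)" by (simp add: cnj_ee)
  also have "\<dots> = exp (of_real (ln (2 * sin (pi * y))) - \<i> * of_real (pi * y - pi / 2))"
    unfolding one_minus_ee_exp[OF y] exp_cnj by simp
  finally have e: "1 - ee (- y) = exp (of_real (ln (2 * sin (pi * y))) - \<i> * of_real (pi * y - pi / 2))" .
  have b2: "- pi < - (pi * y - pi / 2)" "- (pi * y - pi / 2) \<le> pi" using py by linarith+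
  show "Ln (1 - ee (- y)) = of_real (ln (2 * sin (pi * y))) - \<i> * of_real (pi * y - pi / 2)"
    unfolding e by (rule Ln_exp) (use b2 in simp_all)
qed

lemma Re_one_minus_ee_pos:
  assumes y: "0 < y" "y < 1"
  shows "Re (1 - ee y) > 0" "Re (1 - ee (- y)) > 0"
proof -
  have sp: "sin (pi * y) > 0" using y by (intro sin_gt_zero) auto
  have c2: "cos (2 * pi * y) = 1 - 2 * sin (pi * y) ^ 2"
    using cos_double_sin[of "pi * y"] by (simp add: mult_ac)
  show "Re (1 - ee y) > 0" "Re (1 - ee (- y)) > 0"
    using sp by (simp_all add: Re_ee c2)
qed

lemma Q1_eq:
  assumes "0 \<le> s" "s < 1"
  shows "Q 1 s y = - Ln (1 - of_real s * ee y) + Ln (1 - of_real s * ee (- y))"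
  unfolding Q_def using assms by (simp add: polylog_1[unfolded One_nat_def] norm_mult)

lemma base_lim:
  assumes y: "0 < y" "y < 1"
  shows "((\<lambda>s. R 1 s y) \<longlongrightarrow> 0) (at_left 1)"
proof -
  define g where "g = (\<lambda>s::real. - Ln (1 - of_real s * ee y) + Ln (1 - of_real s * ee (- y)))"
  have nz: "1 - ee y \<notin> \<real>\<^sub>\<le>\<^sub>0" "1 - ee (- y) \<notin> \<real>\<^sub>\<le>\<^sub>0"
    using Re_one_minus_ee_pos[OF y] by (auto simp: complex_nonpos_Reals_iff)
  have "isCont g 1" unfolding g_def using nz by (intro continuous_intros) auto
  then have "(g \<longlongrightarrow> g 1) (at 1)" by (rule isContD)
  then have gl: "(g \<longlongrightarrow> g 1) (at_left 1)" by (rule tendsto_mono[OF at_le, rotated]) simp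
  have ev: "eventually (\<lambda>s. g s = Q 1 s y) (at_left 1)"
  proof -
    have "eventually (\<lambda>s. s \<in> {0<..<1}) (at_left (1::real))" by (rule eventually_at_left_real) simp
    then show ?thesis by (rule eventually_mono) (simp add: g_def Q1_eq[unfolded One_nat_def])
  qed
  have "((\<lambda>s. Q 1 s y) \<longlongrightarrow> g 1) (at_left 1)" by (rule Lim_transform_eventually[OF gl ev])
  moreover have "g 1 = cc 1 * of_real (bernpoly 1 y)"
  proof -
    have "g 1 = - Ln (1 - ee y) + Ln (1 - ee (- y))" by (simp add: g_def)
    also have "\<dots> = cc 1 * of_real (bernpoly 1 y)"
      by (simp only: Ln_one_minus_ee[OF y]) (simp add: cc_def bern1[unfolded One_nat_def] algebra_simps)
    finally show ?thesis .
  qed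
  ultimately have "((\<lambda>s. Q 1 s y) \<longlongrightarrow> cc 1 * of_real (bernpoly 1 y)) (at_left 1)" by simp
  then have "((\<lambda>s. Q 1 s y - cc 1 * of_real (bernpoly 1 y)) \<longlongrightarrow> cc 1 * of_real (bernpoly 1 y) - cc 1 * of_real (bernpoly 1 y)) (at_left 1)"
    by (intro tendsto_intros)
  then show ?thesis unfolding R_def by simp
qed

lemma R1_bound:
  assumes s: "0 \<le> s" "s < 1" and y: "y \<in> {0..1}"
  shows "norm (R 1 s y) \<le> 3 * pi"
proof -
  define a where "a = 1 - of_real s * ee y"
  define b where "b = 1 - of_real s * ee (- y)"
  have ba: "b = cnj a" unfolding a_def b_def by (simp add: cnj_ee)
  have "Re (of_real s * ee y) \<le> norm (of_real s * ee y)" by (rule complex_Re_le_cmod)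
  then have "Re a > 0" unfolding a_def using s by (simp add: norm_mult)
  then have a0: "a \<noteq> 0" by auto
  then have b0: "b \<noteq> 0" using ba by simp
  have nab: "norm b = norm a" using ba by simp
  have "Re (- Ln a + Ln b) = 0" using a0 b0 nab by simp
  then have "norm (- Ln a + Ln b) = \<bar>Im (- Ln a + Ln b)\<bar>" by (rule cmod_eq_Im)
  also have "\<dots> \<le> 2 * pi"
    using mpi_less_Im_Ln[OF a0] Im_Ln_le_pi[OF a0] mpi_less_Im_Ln[OF b0] Im_Ln_le_pi[OF b0] by simp
  finally have q: "norm (Q 1 s y) \<le> 2 * pi" unfolding Q1_eq[OF s] a_def b_def .
  have e: "complex_of_real y - 1/2 = of_real (y - 1/2)" by simp
  have "norm (complex_of_real y - 1/2) = \<bar>y - 1/2\<bar>" by (simp only: e norm_of_real)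
  then have "norm (cc 1 * of_real (bernpoly 1 y)) = 2 * pi * \<bar>y - 1/2\<bar>"
    by (simp add: cc_def bern1[unfolded One_nat_def] norm_mult)
  also have "\<dots> \<le> pi" using y by (auto simp: abs_if)
  finally have "norm (cc 1 * of_real (bernpoly 1 y)) \<le> pi" .
  then show ?thesis unfolding R_def using q norm_triangle_ineq4[of "Q 1 s y" "cc 1 * of_real (bernpoly 1 y)"] by simp
qed



lemma E1_lim: "((\<lambda>s. integral {0..1} (\<lambda>u. norm (R 1 s u))) \<longlongrightarrow> 0) (at_left 1)"
proof (rule tendsto_at_left_sequentially[of 0])
  show "(0::real) < 1" by simp
next
  fix S :: "nat \<Rightarrow> real"
  assume S1: "\<And>n. S n < 1" and S0: "\<And>n. 0 < S n" and "incseq S" and St: "S \<longlonglongrightarrow> 1"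
  have Sf: "filterlim S (at_left 1) sequentially"
    by (rule tendsto_imp_filterlim_at_left[OF St]) (use S1 in auto)
  have int: "(\<lambda>u. norm (R 1 (S k) u)) integrable_on {0<..<1}" for k
  proof -
    have "continuous_on {0..1} (R 1 (S k))" by (rule cont_R) (use S0[of k] S1[of k] in auto)
    then have "(\<lambda>u. norm (R 1 (S k) u)) integrable_on {0..1}"
      by (intro integrable_continuous_real continuous_intros)
    then show ?thesis by (simp add: integrable_on_open_interval_real)
  qed
  have dc: "(\<lambda>k. integral {0<..<1} (\<lambda>u. norm (R 1 (S k) u))) \<longlonglongrightarrow> integral {0<..<1} (\<lambda>u::real. 0::real)"
  proof (rule dominated_convergence(2)[where h = "\<lambda>u. 3 * pi"])
    show "(\<lambda>u. norm (R 1 (S k) u)) integrable_on {0<..<1}" for k by (rule int)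
    show "(\<lambda>u::real. 3 * pi) integrable_on {0<..<1}"
      by (simp add: integrable_on_open_interval_real integrable_const_ivl)
    show "norm (norm (R 1 (S k) u)) \<le> 3 * pi" if "u \<in> {0<..<1}" for k u
      using R1_bound[of "S k" u] S0[of k] S1[of k] that by simp
    show "(\<lambda>k. norm (R 1 (S k) u)) \<longlonglongrightarrow> 0" if "u \<in> {0<..<1}" for u
    proof -
      have "((\<lambda>s. R 1 s u) \<longlongrightarrow> 0) (at_left 1)" using that by (intro base_lim) auto
      then have "((\<lambda>k. R 1 (S k) u) \<longlongrightarrow> 0) sequentially" by (rule filterlim_compose[OF _ Sf])
      then show ?thesis by (rule tendsto_norm_zero)
    qed
  qed
  then show "(\<lambda>n. integral {0..1} (\<lambda>u. norm (R 1 (S n) u))) \<longlonglongrightarrow> 0"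
    by (simp add: integral_open_interval_real)
qed

lemma E_lim:
  assumes "N \<ge> 1"
  shows "((\<lambda>s. integral {0..1} (\<lambda>u. norm (R N s u))) \<longlongrightarrow> 0) (at_left 1)"
  using assms
proof (induction N rule: nat_induct_at_least)
  case base
  then show ?case by (rule E1_lim)
next
  case (Suc N)
  define E where "E = (\<lambda>s. integral {0..1} (\<lambda>u. norm (R N s u)))"
  have ev: "eventually (\<lambda>s. s \<in> {0<..<1}) (at_left (1::real))" by (rule eventually_at_left_real) simp
  have lo: "eventually (\<lambda>s. 0 \<le> integral {0..1} (\<lambda>u. norm (R (Suc N) s u))) (at_left 1)"
    using ev
  proof (rule eventually_mono)
    fix s :: real assume s: "s \<in> {0<..<1}"
    show "0 \<le> integral {0..1} (\<lambda>u. norm (R (Suc N) s u))"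
    proof (rule Henstock_Kurzweil_Integration.integral_nonneg)
      have c: "continuous_on {0..1} (R (Suc N) s)" by (rule cont_R) (use s in auto)
      then show "(\<lambda>u. norm (R (Suc N) s u)) integrable_on {0..1}"
        by (intro integrable_continuous_real continuous_intros)
    qed simp
  qed
  have up: "eventually (\<lambda>s. integral {0..1} (\<lambda>u. norm (R (Suc N) s u)) \<le> 4 * pi * E s) (at_left 1)"
    using ev
  proof (rule eventually_mono)
    fix s :: real assume s: "s \<in> {0<..<1}"
    have c: "continuous_on {0..1} (R (Suc N) s)" by (rule cont_R) (use s in auto)
    have b: "norm (R (Suc N) s u) \<le> 4 * pi * E s" if "u \<in> {0..1}" for u
      unfolding E_def by (rule step_bound) (use s that in auto)
    have "integral {0..1} (\<lambda>u. norm (R (Suc N) s u)) \<le> integral {0..1} (\<lambda>u::real. 4 * pi * E s)"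
      by (rule integral_le[OF integrable_continuous_real integrable_const_ivl b])
         (intro continuous_intros c)
    then show "integral {0..1} (\<lambda>u. norm (R (Suc N) s u)) \<le> 4 * pi * E s" by simp
  qed
  have "((\<lambda>s. 4 * pi * E s) \<longlongrightarrow> 4 * pi * 0) (at_left 1)"
    unfolding E_def by (intro tendsto_intros Suc.IH)
  then have "((\<lambda>s. 4 * pi * E s) \<longlongrightarrow> 0) (at_left 1)" by simp
  then show ?case by (rule tendsto_sandwich[OF lo up tendsto_const])
qed

lemma Q_lim:
  assumes N: "N \<ge> 1" and y: "0 < y" "y < 1"
  shows "((\<lambda>s. Q N s y) \<longlongrightarrow> cc N * of_real (bernpoly N y)) (at_left 1)"
proof -
  have "((\<lambda>s. R N s y) \<longlongrightarrow> 0) (at_left 1)"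
  proof (cases "N = 1")
    case True
    then show ?thesis using base_lim[OF y] by simp
  next
    case False
    then obtain M where M: "N = Suc M" "M \<ge> 1" using N by (cases N) auto
    have ev: "eventually (\<lambda>s. s \<in> {0<..<1}) (at_left (1::real))" by (rule eventually_at_left_real) simp
    have "eventually (\<lambda>s. norm (R N s y) \<le> 4 * pi * integral {0..1} (\<lambda>u. norm (R M s u))) (at_left 1)"
      using ev
    proof (rule eventually_mono)
      fix s :: real assume "s \<in> {0<..<1}"
      then show "norm (R N s y) \<le> 4 * pi * integral {0..1} (\<lambda>u. norm (R M s u))"
        unfolding M(1) by (intro step_bound) (use y in auto)
    qed
    moreover have "((\<lambda>s. 4 * pi * integral {0..1} (\<lambda>u. norm (R M s u))) \<longlongrightarrow> 4 * pi * 0) (at_left 1)"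
      by (rule tendsto_mult[OF tendsto_const E_lim[OF M(2)]])
    then have "((\<lambda>s. 4 * pi * integral {0..1} (\<lambda>u. norm (R M s u))) \<longlongrightarrow> 0) (at_left 1)" by simp
    ultimately show ?thesis by (rule Lim_null_comparison)
  qed
  then have "((\<lambda>s. R N s y + cc N * of_real (bernpoly N y)) \<longlongrightarrow> 0 + cc N * of_real (bernpoly N y)) (at_left 1)"
    by (rule tendsto_add[OF _ tendsto_const])
  then show ?thesis by (simp add: R_def)
qed



lemma pl_ee_sums:
  assumes "0 \<le> r" "r < 1"
  shows "(\<lambda>j. of_real r ^ Suc j * ee (- real (Suc j) * \<gamma>) / of_nat (Suc j) ^ k * ee (real (Suc j) * \<phi>))
          sums polylog k (of_real r * ee (\<phi> - \<gamma>))"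
proof -
  have "(\<lambda>j. (of_real r * ee (\<phi> - \<gamma>)) ^ Suc j / of_nat (Suc j) ^ k) sums polylog k (of_real r * ee (\<phi> - \<gamma>))"
    by (rule pl_sums) (use assms in \<open>simp add: norm_mult\<close>)
  moreover have "(of_real r * ee (\<phi> - \<gamma>)) ^ Suc j / of_nat (Suc j) ^ k =
      of_real r ^ Suc j * ee (- real (Suc j) * \<gamma>) / of_nat (Suc j) ^ k * ee (real (Suc j) * \<phi>)" for j
  proof -
    have "ee (\<phi> - \<gamma>) ^ Suc j = ee (- real (Suc j) * \<gamma>) * ee (real (Suc j) * \<phi>)"
      unfolding ee_pow ee_add[symmetric] by (simp add: algebra_simps)
    then show ?thesis by (simp add: power_mult_distrib del: power_Suc of_nat_Suc)
  qed
  ultimately show ?thesis by (simp only:)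
qed

lemma coef_bound:
  assumes "0 \<le> r"
  shows "norm (of_real r ^ Suc j * ee x / of_nat (Suc j) ^ k :: complex) \<le> r ^ Suc j"
proof -
  have "norm (of_real r ^ Suc j * ee x / of_nat (Suc j) ^ k :: complex) = r ^ Suc j / real (Suc j) ^ k"
    using assms by (simp add: norm_divide norm_mult norm_power del: of_nat_Suc power_Suc)
  also have "\<dots> \<le> r ^ Suc j" by (rule div_le_self') (use assms in \<open>auto simp del: of_nat_Suc power_Suc\<close>)
  finally show ?thesis .
qed

lemma geom_summable: "0 \<le> (r::real) \<Longrightarrow> r < 1 \<Longrightarrow> summable (\<lambda>j. C * r ^ Suc j)"
proof -
  assume "0 \<le> r" "r < 1"
  then have "summable (\<lambda>j. r ^ Suc j)" using summable_Suc_iff[of "\<lambda>j. r ^ j"] by (simp add: summable_geometric)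
  from summable_mult[OF this, of C] show ?thesis .
qed

locale PhiInt =
  fixes m n :: nat and \<alpha> \<beta> r :: real
  assumes r: "0 \<le> r" "r < 1"
begin

definition "\<sigma> = ((-1) ^ m :: complex)"
definition "\<tau> = ((-1) ^ n :: complex)"
definition "a1 j = of_real r ^ Suc j * ee (- real (Suc j) * \<beta>) / of_nat (Suc j) ^ m"
definition "a2 j = - \<sigma> * (of_real r ^ Suc j * ee (- real (Suc j) * (- \<beta>)) / of_nat (Suc j) ^ m)"
definition "b1 j = of_real r ^ Suc j * ee (- real (Suc j) * \<alpha>) / of_nat (Suc j) ^ n"
definition "b2 j = \<tau> * (of_real r ^ Suc j * ee (- real (Suc j) * (- \<alpha>)) / of_nat (Suc j) ^ n)"
definition "A \<phi> = polylog m (of_real r * ee (\<phi> - \<beta>)) - \<sigma> * polylog m (of_real r * ee (- \<phi> - (- \<beta>)))"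
definition "B \<phi> = polylog n (of_real r * ee (\<phi> - \<alpha>)) + \<tau> * polylog n (of_real r * ee (- \<phi> - (- \<alpha>)))"
definition "al j \<phi> = a1 j * ee (real (Suc j) * \<phi>) + a2 j * ee (- real (Suc j) * \<phi>)"
definition "be j \<phi> = b1 j * ee (real (Suc j) * \<phi>) + b2 j * ee (- real (Suc j) * \<phi>)"

lemma norm_sigma [simp]: "norm \<sigma> = 1" and norm_tau [simp]: "norm \<tau> = 1"
  by (simp_all add: \<sigma>_def \<tau>_def norm_power)

lemma A_sums: "(\<lambda>j. al j \<phi>) sums A \<phi>"
proof -
  have 1: "(\<lambda>j. a1 j * ee (real (Suc j) * \<phi>)) sums polylog m (of_real r * ee (\<phi> - \<beta>))"
    unfolding a1_def by (rule pl_ee_sums[OF r])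
  have 2: "(\<lambda>j. of_real r ^ Suc j * ee (- real (Suc j) * (- \<beta>)) / of_nat (Suc j) ^ m * ee (- real (Suc j) * \<phi>))
       sums polylog m (of_real r * ee (- \<phi> - (- \<beta>)))"
    using pl_ee_sums[OF r, where \<gamma>="- \<beta>" and k=m and \<phi>="- \<phi>"] by (simp add: algebra_simps)
  have "(\<lambda>j. a1 j * ee (real (Suc j) * \<phi>) + - \<sigma> * (of_real r ^ Suc j * ee (- real (Suc j) * (- \<beta>)) / of_nat (Suc j) ^ m * ee (- real (Suc j) * \<phi>)))
       sums (polylog m (of_real r * ee (\<phi> - \<beta>)) + - \<sigma> * polylog m (of_real r * ee (- \<phi> - (- \<beta>))))"
    by (intro sums_add 1 sums_mult 2)
  then show ?thesis unfolding al_def A_def a2_def by (simp add: mult.assoc)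
qed

lemma B_sums: "(\<lambda>j. be j \<phi>) sums B \<phi>"
proof -
  have 1: "(\<lambda>j. b1 j * ee (real (Suc j) * \<phi>)) sums polylog n (of_real r * ee (\<phi> - \<alpha>))"
    unfolding b1_def by (rule pl_ee_sums[OF r])
  have 2: "(\<lambda>j. of_real r ^ Suc j * ee (- real (Suc j) * (- \<alpha>)) / of_nat (Suc j) ^ n * ee (- real (Suc j) * \<phi>))
       sums polylog n (of_real r * ee (- \<phi> - (- \<alpha>)))"
    using pl_ee_sums[OF r, where \<gamma>="- \<alpha>" and k=n and \<phi>="- \<phi>"] by (simp add: algebra_simps)
  have "(\<lambda>j. b1 j * ee (real (Suc j) * \<phi>) + \<tau> * (of_real r ^ Suc j * ee (- real (Suc j) * (- \<alpha>)) / of_nat (Suc j) ^ n * ee (- real (Suc j) * \<phi>)))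
       sums (polylog n (of_real r * ee (\<phi> - \<alpha>)) + \<tau> * polylog n (of_real r * ee (- \<phi> - (- \<alpha>))))"
    by (intro sums_add 1 sums_mult 2)
  then show ?thesis unfolding be_def B_def b2_def by (simp add: mult.assoc)
qed

lemma al_bound: "norm (al j \<phi>) \<le> 2 * r ^ Suc j"
proof -
  have "norm (al j \<phi>) \<le> norm (a1 j) + norm (a2 j)"
    unfolding al_def using norm_triangle_ineq[of "a1 j * ee (real (Suc j) * \<phi>)" "a2 j * ee (- real (Suc j) * \<phi>)"]
    by (simp add: norm_mult)
  also have "\<dots> \<le> r ^ Suc j + r ^ Suc j"
  proof (rule add_mono)
    show "norm (a1 j) \<le> r ^ Suc j" unfolding a1_def by (rule coef_bound[OF r(1)])
    show "norm (a2 j) \<le> r ^ Suc j" unfolding a2_def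
      by (simp only: norm_mult norm_minus_cancel norm_sigma norm_tau mult_1) (rule coef_bound[OF r(1)])
  qed
  finally show ?thesis by simp
qed

lemma be_bound: "norm (be j \<phi>) \<le> 2 * r ^ Suc j"
proof -
  have "norm (be j \<phi>) \<le> norm (b1 j) + norm (b2 j)"
    unfolding be_def using norm_triangle_ineq[of "b1 j * ee (real (Suc j) * \<phi>)" "b2 j * ee (- real (Suc j) * \<phi>)"]
    by (simp add: norm_mult)
  also have "\<dots> \<le> r ^ Suc j + r ^ Suc j"
  proof (rule add_mono)
    show "norm (b1 j) \<le> r ^ Suc j" unfolding b1_def by (rule coef_bound[OF r(1)])
    show "norm (b2 j) \<le> r ^ Suc j" unfolding b2_def
      by (simp only: norm_mult norm_minus_cancel norm_sigma norm_tau mult_1) (rule coef_bound[OF r(1)])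
  qed
  finally show ?thesis by simp
qed

definition "CA = (\<Sum>j. 2 * r ^ Suc j)"

lemma A_bound: "norm (A \<phi>) \<le> CA"
proof -
  have "A \<phi> = (\<Sum>j. al j \<phi>)" using A_sums sums_unique by blast
  also have "norm \<dots> \<le> CA" unfolding CA_def
    by (rule norm_suminf_le[OF al_bound geom_summable[OF r]])
  finally show ?thesis .
qed

lemma cont_al: "continuous_on S (al j)" unfolding al_def by (intro continuous_intros)
lemma cont_be: "continuous_on S (be j)" unfolding be_def by (intro continuous_intros)
lemma cont_A: "continuous_on S A"
  unfolding A_def using r by (intro continuous_intros) (auto simp: norm_mult)
lemma cont_B: "continuous_on S B"
  unfolding B_def using r by (intro continuous_intros) (auto simp: norm_mult)

definition "X k = a1 k * b2 k + a2 k * b1 k"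

lemma int_al_be: "integral {0..1} (\<lambda>\<phi>. al j \<phi> * be k \<phi>) = (if j = k then X k else 0)"
  unfolding al_def be_def X_def
  using ee_prod_integral[of "Suc j" "Suc k" "a1 j" "a2 j" "b1 k" "b2 k"] by (auto simp: integral_unique)

lemma int_A_be: "integral {0..1} (\<lambda>\<phi>. A \<phi> * be k \<phi>) = X k"
proof -
  have eq: "(\<lambda>\<phi>. A \<phi> * be k \<phi>) = (\<lambda>\<phi>. \<Sum>j. al j \<phi> * be k \<phi>)"
  proof
    fix \<phi> show "A \<phi> * be k \<phi> = (\<Sum>j. al j \<phi> * be k \<phi>)"
      using sums_mult2[OF A_sums, where c="be k \<phi>"] sums_unique by blast
  qed
  have "(\<lambda>j. integral {0..1} (\<lambda>\<phi>. al j \<phi> * be k \<phi>)) sums integral {0..1} (\<lambda>\<phi>. \<Sum>j. al j \<phi> * be k \<phi>)"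
  proof (rule series_integral(2))
    show "continuous_on {0..1} (\<lambda>\<phi>. al j \<phi> * be k \<phi>)" for j
      by (intro continuous_intros cont_al cont_be)
    show "norm (al j \<phi> * be k \<phi>) \<le> (4 * r ^ Suc k) * r ^ Suc j" if "\<phi> \<in> {0..1}" for j \<phi>
    proof -
      have "norm (al j \<phi> * be k \<phi>) \<le> (2 * r ^ Suc j) * (2 * r ^ Suc k)"
        unfolding norm_mult by (intro mult_mono al_bound be_bound) (use r in auto)
      then show ?thesis by (simp add: mult_ac)
    qed
    show "summable (\<lambda>j. (4 * r ^ Suc k) * r ^ Suc j)" by (rule geom_summable[OF r])
  qed
  then have "(\<lambda>j. if j = k then X k else 0) sums integral {0..1} (\<lambda>\<phi>. A \<phi> * be k \<phi>)"
    unfolding int_al_be eq .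
  moreover have "(\<lambda>j. if j = k then X k else 0) sums X k"
  proof -
    have "(\<lambda>j. if j = k then X k else 0) = (\<lambda>j. if j = k then X j else 0)" by (rule ext) simp
    then show ?thesis using sums_single[of k X] by simp
  qed
  ultimately show ?thesis using sums_unique2 by blast
qed

lemma AB_int:
  shows "(\<lambda>\<phi>. A \<phi> * B \<phi>) integrable_on {0..1}"
    and "X sums integral {0..1} (\<lambda>\<phi>. A \<phi> * B \<phi>)"
proof -
  have eq: "(\<lambda>\<phi>. A \<phi> * B \<phi>) = (\<lambda>\<phi>. \<Sum>k. A \<phi> * be k \<phi>)"
  proof
    fix \<phi> show "A \<phi> * B \<phi> = (\<Sum>k. A \<phi> * be k \<phi>)"
      using sums_mult[OF B_sums, where c="A \<phi>"] sums_unique by blast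
  qed
  have c: "continuous_on {0..1} (\<lambda>\<phi>. A \<phi> * be k \<phi>)" for k
    by (intro continuous_intros cont_A cont_be)
  have b: "norm (A \<phi> * be k \<phi>) \<le> (2 * CA) * r ^ Suc k" if "\<phi> \<in> {0..1}" for k \<phi>
  proof -
    have "norm (A \<phi> * be k \<phi>) \<le> CA * (2 * r ^ Suc k)"
      unfolding norm_mult by (intro mult_mono A_bound be_bound) (use order_trans[OF norm_ge_zero A_bound] in auto)
    then show ?thesis by simp
  qed
  have s: "summable (\<lambda>k. (2 * CA) * r ^ Suc k)" by (rule geom_summable[OF r])
  show "(\<lambda>\<phi>. A \<phi> * B \<phi>) integrable_on {0..1}"
    unfolding eq by (rule series_integral(1)[OF c b s])
  show "X sums integral {0..1} (\<lambda>\<phi>. A \<phi> * B \<phi>)"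
    using series_integral(2)[OF c b s] unfolding eq int_A_be .
qed

definition "Y k = (\<tau> * ee (real (Suc k) * (\<alpha> - \<beta>)) - \<sigma> * ee (- real (Suc k) * (\<alpha> - \<beta>))) / of_nat (Suc k) ^ (m + n)"

lemma X_eq: "X k = of_real r ^ (2 * Suc k) * Y k"
proof -
  define K where "K = real (Suc k)"
  have e1: "ee (- K * \<beta>) * ee (- K * (- \<alpha>)) = ee (K * (\<alpha> - \<beta>))"
    by (simp add: ee_add[symmetric] algebra_simps)
  have e2: "ee (- K * (- \<beta>)) * ee (- K * \<alpha>) = ee (- K * (\<alpha> - \<beta>))"
    by (simp add: ee_add[symmetric] algebra_simps)
  have p: "(of_real r :: complex) ^ Suc k * of_real r ^ Suc k = of_real r ^ (2 * Suc k)"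
    by (simp only: mult_2 power_add)
  have q: "(of_nat (Suc k) :: complex) ^ m * of_nat (Suc k) ^ n = of_nat (Suc k) ^ (m + n)"
    by (simp only: power_add)
  have "X k = (of_real r ^ Suc k * of_real r ^ Suc k) / (of_nat (Suc k) ^ m * of_nat (Suc k) ^ n) *
        (\<tau> * (ee (- K * \<beta>) * ee (- K * (- \<alpha>))) - \<sigma> * (ee (- K * (- \<beta>)) * ee (- K * \<alpha>)))"
    unfolding X_def a1_def a2_def b1_def b2_def K_def by (simp add: field_simps) (simp add: diff_divide_distrib)
  also have "\<dots> = of_real r ^ (2 * Suc k) * Y k"
    unfolding e1 e2 p q unfolding Y_def K_def by (simp add: field_simps)
  finally show ?thesis .
qed

lemma norm_Y: "norm (Y k) \<le> 2"
proof -
  have "norm (Y k) = norm (\<tau> * ee (real (Suc k) * (\<alpha> - \<beta>)) - \<sigma> * ee (- real (Suc k) * (\<alpha> - \<beta>))) / real (Suc k) ^ (m + n)"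
    unfolding Y_def by (simp add: norm_divide norm_power del: of_nat_Suc)
  also have "\<dots> \<le> norm (\<tau> * ee (real (Suc k) * (\<alpha> - \<beta>)) - \<sigma> * ee (- real (Suc k) * (\<alpha> - \<beta>)))"
    by (rule div_le_self') (auto simp del: of_nat_Suc)
  also have "\<dots> \<le> norm (\<tau> * ee (real (Suc k) * (\<alpha> - \<beta>))) + norm (\<sigma> * ee (- real (Suc k) * (\<alpha> - \<beta>)))"
    by (rule norm_triangle_ineq4)
  also have "\<dots> = 2" by (simp add: norm_mult)
  finally show ?thesis .
qed

lemma AB_eq:
  "(polylog m (of_real r * exp (2 * of_real pi * \<i> * of_real \<phi>) * cnj (exp (2 * of_real pi * \<i> * of_real \<beta>)))
      - (-1) ^ m * cnj (polylog m (of_real r * exp (2 * of_real pi * \<i> * of_real \<phi>) * cnj (exp (2 * of_real pi * \<i> * of_real \<beta>)))))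
    * (polylog n (of_real r * exp (2 * of_real pi * \<i> * of_real \<phi>) * cnj (exp (2 * of_real pi * \<i> * of_real \<alpha>)))
      + (-1) ^ n * cnj (polylog n (of_real r * exp (2 * of_real pi * \<i> * of_real \<phi>) * cnj (exp (2 * of_real pi * \<i> * of_real \<alpha>)))))
   = A \<phi> * B \<phi>"
proof -
  have w: "of_real r * exp (2 * of_real pi * \<i> * of_real \<phi>) * cnj (exp (2 * of_real pi * \<i> * of_real \<gamma>)) = of_real r * ee (\<phi> - \<gamma>)" for \<gamma>
  proof -
    have "exp (2 * of_real pi * \<i> * of_real \<phi>) * cnj (exp (2 * of_real pi * \<i> * of_real \<gamma>)) = ee \<phi> * ee (- \<gamma>)"
      unfolding ee_def by (simp add: exp_cnj)
    also have "\<dots> = ee (\<phi> - \<gamma>)" by (simp add: ee_add[symmetric])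
    finally show ?thesis by (simp add: mult.assoc)
  qed
  have c: "cnj (polylog k (of_real r * ee (\<phi> - \<gamma>))) = polylog k (of_real r * ee (- \<phi> - (- \<gamma>)))" for k \<gamma>
  proof -
    have "cnj (polylog k (of_real r * ee (\<phi> - \<gamma>))) = polylog k (cnj (of_real r * ee (\<phi> - \<gamma>)))"
      by (rule polylog_cnj) (use r in \<open>simp add: norm_mult\<close>)
    also have "cnj (of_real r * ee (\<phi> - \<gamma>)) = of_real r * ee (- \<phi> - (- \<gamma>))"
      by (simp add: cnj_ee)
    finally show ?thesis .
  qed
  show ?thesis unfolding w c A_def B_def \<sigma>_def \<tau>_def ..
qed

end



definition Yc :: "nat \<Rightarrow> nat \<Rightarrow> real \<Rightarrow> real \<Rightarrow> nat \<Rightarrow> complex" where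
  "Yc m n \<alpha> \<beta> k = ((-1) ^ n * ee (real (Suc k) * (\<alpha> - \<beta>)) - (-1) ^ m * ee (- real (Suc k) * (\<alpha> - \<beta>)))
      / of_nat (Suc k) ^ (m + n)"

context PhiInt
begin

lemma Y_Yc: "Y = Yc m n \<alpha> \<beta>"
  by (rule ext) (simp add: Y_def Yc_def \<sigma>_def \<tau>_def)

lemma f_facts:
  assumes "g = (\<lambda>\<phi>. (polylog m (of_real r * exp (2 * of_real pi * \<i> * of_real \<phi>) * cnj (exp (2 * of_real pi * \<i> * of_real \<beta>)))
      - (-1) ^ m * cnj (polylog m (of_real r * exp (2 * of_real pi * \<i> * of_real \<phi>) * cnj (exp (2 * of_real pi * \<i> * of_real \<beta>)))))
    * (polylog n (of_real r * exp (2 * of_real pi * \<i> * of_real \<phi>) * cnj (exp (2 * of_real pi * \<i> * of_real \<alpha>)))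
      + (-1) ^ n * cnj (polylog n (of_real r * exp (2 * of_real pi * \<i> * of_real \<phi>) * cnj (exp (2 * of_real pi * \<i> * of_real \<alpha>))))))"
  shows "g integrable_on {0..1}" "(\<lambda>k. of_real r ^ (2 * Suc k) * Yc m n \<alpha> \<beta> k) sums integral {0..1} g"
proof -
  have g: "g = (\<lambda>\<phi>. A \<phi> * B \<phi>)" unfolding assms by (rule ext) (rule AB_eq)
  show "g integrable_on {0..1}" unfolding g by (rule AB_int(1))
  have "X = (\<lambda>k. of_real r ^ (2 * Suc k) * Yc m n \<alpha> \<beta> k)" by (rule ext) (simp add: X_eq Y_Yc)
  then show "(\<lambda>k. of_real r ^ (2 * Suc k) * Yc m n \<alpha> \<beta> k) sums integral {0..1} g"
    using AB_int(2) unfolding g by simp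
qed

end

lemma norm_Yc: "norm (Yc m n \<alpha> \<beta> k) \<le> 2"
proof -
  interpret PhiInt m n \<alpha> \<beta> 0 by unfold_locales auto
  show ?thesis using norm_Y Y_Yc by simp
qed

lemma ee_shift:
  assumes "h = 0 \<or> h = 1"
  shows "ee (real K * (x + h)) = ee (real K * x)" "ee (- real K * (x + h)) = ee (- real K * x)"
proof -
  have "ee (real K * (x + h)) = ee (real K * x) * ee (of_int (int K * (if h = 0 then 0 else 1)))"
    using assms by (auto simp: ee_add[symmetric] algebra_simps)
  then show 1: "ee (real K * (x + h)) = ee (real K * x)" by (simp only: ee_int mult_1_right)
  show "ee (- real K * (x + h)) = ee (- real K * x)"
    using arg_cong[OF 1, of cnj] by (simp add: cnj_ee)
qed

lemma pow_int:
  fixes c :: complex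
  assumes "0 \<le> t"
  shows "((\<lambda>r. of_real (r ^ (2 * k + 1)) * c) has_integral (of_real (t ^ (2 * k + 2) / (2 * k + 2)) * c)) {0..t}"
proof -
  have "((\<lambda>r. of_real (r ^ (2 * k + 2) / (2 * k + 2)) * c) has_vector_derivative (of_real (r ^ (2 * k + 1)) * c)) (at r within {0..t})" for r
  proof -
    have "((\<lambda>r. r ^ (2 * k + 2) / (2 * k + 2)) has_real_derivative (real (2 * k + 2) * r ^ (2 * k + 2 - 1) / (2 * k + 2))) (at r within {0..t})"
      by (intro derivative_eq_intros) auto
    moreover have "real (2 * k + 2) * r ^ (2 * k + 2 - 1) / (2 * k + 2) = r ^ (2 * k + 1)"
      by (simp add: field_simps)
    ultimately have "((\<lambda>r. r ^ (2 * k + 2) / (2 * k + 2)) has_real_derivative (r ^ (2 * k + 1))) (at r within {0..t})"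
      by simp
    from has_vector_derivative_mult_left[OF has_vector_derivative_of_real[OF this], of c]
    show ?thesis .
  qed
  then have "((\<lambda>r. of_real (r ^ (2 * k + 1)) * c) has_integral
      (of_real (t ^ (2 * k + 2) / (2 * k + 2)) * c - of_real (0 ^ (2 * k + 2) / (2 * k + 2)) * c)) {0..t}"
    by (intro fundamental_theorem_of_calculus assms)
  then show ?thesis by (simp add: add.commute)
qed

lemma Q_sums:
  assumes h: "h = 0 \<or> h = 1" and t: "0 \<le> t" "t < 1"
  shows "(\<lambda>k. of_real (t ^ (2 * k + 2) / (2 * k + 2)) * Yc m n \<alpha> \<beta> k) sums
           ((-1) ^ n / 2 * Q (m + n + 1) (t ^ 2) (\<alpha> - \<beta> + h))"
proof -
  define N where "N = m + n + 1"
  define y where "y = \<alpha> - \<beta> + h"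
  define s where "s = t ^ 2"
  have s: "0 \<le> s" "s < 1" unfolding s_def using t by (auto simp: power_less_one_iff abs_square_less_1)
  have S1: "(\<lambda>j. (of_real s * ee y) ^ Suc j / of_nat (Suc j) ^ N) sums polylog N (of_real s * ee y)"
    by (rule pl_sums) (use s in \<open>simp add: norm_mult\<close>)
  have S2: "(\<lambda>j. (of_real s * ee (- y)) ^ Suc j / of_nat (Suc j) ^ N) sums polylog N (of_real s * ee (- y))"
    by (rule pl_sums) (use s in \<open>simp add: norm_mult\<close>)
  have S: "(\<lambda>j. (-1) ^ n / 2 * ((of_real s * ee y) ^ Suc j / of_nat (Suc j) ^ N +
            (-1) ^ N * ((of_real s * ee (- y)) ^ Suc j / of_nat (Suc j) ^ N))) sums
          ((-1) ^ n / 2 * Q N s y)"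
    unfolding Q_def by (intro sums_mult sums_add S1 S2)
  have tm: "(-1) ^ n / 2 * ((of_real s * ee y) ^ Suc j / of_nat (Suc j) ^ N +
            (-1) ^ N * ((of_real s * ee (- y)) ^ Suc j / of_nat (Suc j) ^ N))
       = of_real (t ^ (2 * j + 2) / (2 * j + 2)) * Yc m n \<alpha> \<beta> j" for j
  proof -
    define E1 where "E1 = ee (real (Suc j) * (\<alpha> - \<beta>))"
    define E2 where "E2 = ee (- real (Suc j) * (\<alpha> - \<beta>))"
    define T where "T = (of_real t :: complex) ^ (2 * Suc j)"
    define D where "D = (of_nat (Suc j) :: complex) ^ (m + n)"
    have D0: "D \<noteq> 0" unfolding D_def by (simp del: of_nat_Suc)
    define Kc where "Kc = (of_nat (Suc j) :: complex)"
    have J0: "Kc \<noteq> 0" unfolding Kc_def by (simp del: of_nat_Suc)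
    have p1: "(of_real s * ee y) ^ Suc j = T * E1"
      unfolding s_def T_def E1_def y_def
      by (simp only: power_mult_distrib ee_pow ee_shift[OF h] of_real_power power_mult)
    have p2: "(of_real s * ee (- y)) ^ Suc j = T * E2"
    proof -
      have "ee (real (Suc j) * - (\<alpha> - \<beta> + h)) = ee (- real (Suc j) * (\<alpha> - \<beta> + h))" by (simp only: mult_minus_right mult_minus_left)
      then show ?thesis unfolding s_def T_def E2_def y_def
        by (simp only: power_mult_distrib ee_pow ee_shift[OF h] of_real_power power_mult)
    qed
    have nN: "(of_nat (Suc j) :: complex) ^ N = D * Kc" unfolding N_def D_def Kc_def by simp
    have sg: "(-1) ^ n * (-1) ^ N = - ((-1) ^ m :: complex)"
    proof -
      have "(-1) ^ n * (-1) ^ N = ((-1) ^ m * ((-1) ^ n * (-1) ^ n) * (-1) :: complex)"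
        unfolding N_def by (simp add: power_add)
      also have "(-1) ^ n * (-1) ^ n = (1 :: complex)" by (simp flip: power_add)
      finally show ?thesis by simp
    qed
    have tt: "of_real (t ^ (2 * j + 2) / (2 * j + 2)) = T / (2 * Kc)"
      unfolding T_def Kc_def by (simp add: field_simps)
    have "(-1) ^ n / 2 * ((of_real s * ee y) ^ Suc j / of_nat (Suc j) ^ N +
            (-1) ^ N * ((of_real s * ee (- y)) ^ Suc j / of_nat (Suc j) ^ N))
        = ((-1) ^ n * (T * E1) + ((-1) ^ n * (-1) ^ N) * (T * E2)) / (2 * (D * Kc))"
      unfolding p1 p2 nN using D0 J0 by (simp add: field_simps)
    also have "\<dots> = T / (2 * Kc) * (((-1) ^ n * E1 - (-1) ^ m * E2) / D)"
      unfolding sg using D0 J0 by (simp add: field_simps)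
    also have "\<dots> = of_real (t ^ (2 * j + 2) / (2 * j + 2)) * Yc m n \<alpha> \<beta> j"
      unfolding tt Yc_def E1_def E2_def D_def ..
    finally show ?thesis .
  qed
  show ?thesis using S unfolding tm unfolding N_def s_def y_def .
qed



theorem lemma5p1:
  fixes m n :: nat and \<alpha> \<beta> :: real and U V :: complex
  assumes "0 \<le> \<alpha>" "\<alpha> < 1" "0 \<le> \<beta>" "\<beta> < 1" "\<alpha> \<noteq> \<beta>"
    and "U = exp (2 * of_real pi * \<i> * of_real \<alpha>)"
    and "V = exp (2 * of_real pi * \<i> * of_real \<beta>)"
  defines "f \<equiv> (\<lambda>r \<phi>::real.
      (polylog m (of_real r * exp (2 * of_real pi * \<i> * of_real \<phi>) * cnj V)
        - (-1) ^ m * cnj (polylog m (of_real r * exp (2 * of_real pi * \<i> * of_real \<phi>) * cnj V)))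
    * (polylog n (of_real r * exp (2 * of_real pi * \<i> * of_real \<phi>) * cnj U)
        + (-1) ^ n * cnj (polylog n (of_real r * exp (2 * of_real pi * \<i> * of_real \<phi>) * cnj U))))"
  shows "(\<forall>r\<in>{0..<1}. f r integrable_on {0..1})
    \<and> (\<forall>t\<in>{0<..<1}. (\<lambda>r. integral {0..1} (f r) / of_real r) integrable_on {0..t})
    \<and> ((\<lambda>t. 2 / (2 * of_real pi * \<i>) ^ (m + n + 1)
            * integral {0..t} (\<lambda>r. integral {0..1} (f r) / of_real r))
        \<longlongrightarrow> - ((-1) ^ n / of_nat (fact (m + n + 1)))
             * of_real (bernpoly (m + n + 1) (\<alpha> - \<beta> + heaviside (\<beta> - \<alpha>)))) (at_left 1)"
proof -
  define N where "N = m + n + 1"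
  define Y' where "Y' = Yc m n \<alpha> \<beta>"
  define h where "h = heaviside (\<beta> - \<alpha>)"
  define y where "y = \<alpha> - \<beta> + h"
  define g where "g = (\<lambda>r. integral {0..1} (f r) / of_real r)"
  have h01: "h = 0 \<or> h = 1" unfolding h_def heaviside_def by auto
  have y01': "0 < y \<and> y < 1"
  proof (cases "\<alpha> < \<beta>")
    case True
    then have "h = 1" unfolding h_def heaviside_def by simp
    then show ?thesis unfolding y_def using True assms(1-4) by auto
  next
    case False
    then have "\<beta> < \<alpha>" using assms(5) by simp
    then have "h = 0" unfolding h_def heaviside_def by simp
    then show ?thesis unfolding y_def using \<open>\<beta> < \<alpha>\<close> assms(1-4) by auto
  qed
  then have y01: "0 < y" "y < 1" by auto
  have F: "f r integrable_on {0..1} \<and> (\<lambda>k. of_real r ^ (2 * Suc k) * Y' k) sums integral {0..1} (f r)"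
    if r: "r \<in> {0..<1}" for r
  proof -
    interpret PhiInt m n \<alpha> \<beta> r using r by unfold_locales auto
    have e: "f r = (\<lambda>\<phi>. (polylog m (of_real r * exp (2 * of_real pi * \<i> * of_real \<phi>) * cnj (exp (2 * of_real pi * \<i> * of_real \<beta>)))
      - (-1) ^ m * cnj (polylog m (of_real r * exp (2 * of_real pi * \<i> * of_real \<phi>) * cnj (exp (2 * of_real pi * \<i> * of_real \<beta>)))))
    * (polylog n (of_real r * exp (2 * of_real pi * \<i> * of_real \<phi>) * cnj (exp (2 * of_real pi * \<i> * of_real \<alpha>)))
      + (-1) ^ n * cnj (polylog n (of_real r * exp (2 * of_real pi * \<i> * of_real \<phi>) * cnj (exp (2 * of_real pi * \<i> * of_real \<alpha>))))))"
      unfolding f_def assms(6) assms(7) by (rule refl)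
    show ?thesis using f_facts[OF e] unfolding Y'_def by blast
  qed
  have G: "(\<lambda>k. of_real (r ^ (2 * k + 1)) * Y' k) sums g r" if r: "r \<in> {0..<1}" for r
  proof (cases "r = 0")
    case True
    have "(\<lambda>k. of_real r ^ (2 * Suc k) * Y' k) = (\<lambda>k. 0)" using True by (intro ext) simp
    then have "integral {0..1} (f r) = 0" using F[OF r] sums_zero sums_unique2 by metis
    then show ?thesis using True unfolding g_def by simp
  next
    case False
    then have r0: "r > 0" using r by simp
    from sums_divide[OF conjunct2[OF F[OF r]], of "of_real r"]
    have "(\<lambda>k. of_real r ^ (2 * Suc k) * Y' k / of_real r) sums g r" unfolding g_def .
    moreover have "of_real r ^ (2 * Suc k) * Y' k / of_real r = of_real (r ^ (2 * k + 1)) * Y' k" for k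
      using r0 by (simp add: field_simps)
    ultimately show ?thesis by simp
  qed
  have I: "g integrable_on {0..t} \<and> (\<lambda>k. of_real (t ^ (2 * k + 2) / (2 * k + 2)) * Y' k) sums integral {0..t} g"
    if t: "t \<in> {0<..<1}" for t
  proof -
    define gk where "gk = (\<lambda>k r. of_real (r ^ (2 * k + 1)) * Y' k)"
    have c: "continuous_on {0..t} (gk k)" for k unfolding gk_def by (intro continuous_intros)
    have b: "norm (gk k r) \<le> 2 * t * (t ^ 2) ^ k" if "r \<in> {0..t}" for k r
    proof -
      have "norm (gk k r) = r ^ (2 * k + 1) * norm (Y' k)"
        unfolding gk_def using that by (simp add: norm_mult norm_power)
      also have "\<dots> \<le> t ^ (2 * k + 1) * 2"
        using that norm_Yc[of m n \<alpha> \<beta> k] unfolding Y'_def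
        by (intro mult_mono power_mono) auto
      also have "t ^ (2 * k + 1) = t * (t ^ 2) ^ k" by (simp add: power_mult[symmetric] power_add)
      finally show ?thesis by simp
    qed
    have s: "summable (\<lambda>k. 2 * t * (t ^ 2) ^ k)"
      using t by (intro summable_mult summable_geometric) (auto simp: abs_square_less_1)
    have eq: "(\<Sum>k. gk k r) = g r" if "r \<in> {0..t}" for r
      using G[of r] that t unfolding gk_def by (auto simp: sums_iff)
    have int: "(\<lambda>r. \<Sum>k. gk k r) integrable_on {0..t}" by (rule series_integral(1)[OF c b s])
    have sm: "(\<lambda>k. integral {0..t} (gk k)) sums integral {0..t} (\<lambda>r. \<Sum>k. gk k r)"
      by (rule series_integral(2)[OF c b s])
    have ig: "integral {0..t} (gk k) = of_real (t ^ (2 * k + 2) / (2 * k + 2)) * Y' k" for k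
    proof -
      have "0 \<le> t" using t by simp
      from integral_unique[OF pow_int[OF this, where k=k and c="Y' k"]]
      show ?thesis unfolding gk_def by simp
    qed
    show ?thesis
    proof
      show "g integrable_on {0..t}" using integrable_eq[OF int eq] .
      have "integral {0..t} (\<lambda>r. \<Sum>k. gk k r) = integral {0..t} g"
        by (rule Henstock_Kurzweil_Integration.integral_cong) (rule eq)
      then show "(\<lambda>k. of_real (t ^ (2 * k + 2) / (2 * k + 2)) * Y' k) sums integral {0..t} g"
        using sm unfolding ig by simp
    qed
  qed
  have T: "integral {0..t} g = (-1) ^ n / 2 * Q N (t ^ 2) y" if t: "t \<in> {0<..<1}" for t
  proof -
    have "(\<lambda>k. of_real (t ^ (2 * k + 2) / (2 * k + 2)) * Y' k) sums ((-1) ^ n / 2 * Q N (t ^ 2) y)"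
      unfolding Y'_def N_def y_def using t by (intro Q_sums h01) auto
    then show ?thesis using conjunct2[OF I[OF t]] sums_unique2 by blast
  qed
  have lim1: "((\<lambda>t. Q N (t ^ 2) y) \<longlongrightarrow> cc N * of_real (bernpoly N y)) (at_left 1)"
  proof -
    have "filterlim (\<lambda>t::real. t ^ 2) (at_left 1) (at_left 1)"
    proof (rule tendsto_imp_filterlim_at_left)
      have "((\<lambda>t::real. t ^ 2) \<longlongrightarrow> 1 ^ 2) (at_left 1)" by (intro tendsto_intros)
      then show "((\<lambda>t::real. t ^ 2) \<longlongrightarrow> 1) (at_left 1)" by simp
      have "eventually (\<lambda>t. t \<in> {0<..<1}) (at_left (1::real))" by (rule eventually_at_left_real) simp
      then show "eventually (\<lambda>t::real. t ^ 2 < 1) (at_left 1)"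
        by (rule eventually_mono) (auto simp: abs_square_less_1)
    qed
    moreover have "((\<lambda>s. Q N s y) \<longlongrightarrow> cc N * of_real (bernpoly N y)) (at_left 1)"
      by (rule Q_lim) (use y01 in \<open>auto simp: N_def\<close>)
    ultimately show ?thesis by (rule filterlim_compose[rotated])
  qed
  have lim2: "((\<lambda>t. (-1) ^ n / (2 * of_real pi * \<i>) ^ N * Q N (t ^ 2) y) \<longlongrightarrow>
              (-1) ^ n / (2 * of_real pi * \<i>) ^ N * (cc N * of_real (bernpoly N y))) (at_left 1)"
    by (rule tendsto_mult[OF tendsto_const lim1])
  have ev: "eventually (\<lambda>t. (-1) ^ n / (2 * of_real pi * \<i>) ^ N * Q N (t ^ 2) y =
              2 / (2 * of_real pi * \<i>) ^ N * integral {0..t} g) (at_left 1)"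
  proof -
    have "eventually (\<lambda>t. t \<in> {0<..<1}) (at_left (1::real))" by (rule eventually_at_left_real) simp
    then show ?thesis by (rule eventually_mono) (simp add: T)
  qed
  have val: "(-1) ^ n / (2 * of_real pi * \<i>) ^ N * (cc N * of_real (bernpoly N y))
       = - ((-1) ^ n / of_nat (fact N)) * of_real (bernpoly N y)"
  proof -
    have "(2 * of_real pi * \<i> :: complex) ^ N \<noteq> 0" by simp
    then show ?thesis unfolding cc_def by (simp add: field_simps)
  qed
  have lim: "((\<lambda>t. 2 / (2 * of_real pi * \<i>) ^ N * integral {0..t} g) \<longlongrightarrow>
        - ((-1) ^ n / of_nat (fact N)) * of_real (bernpoly N y)) (at_left 1)"
    using Lim_transform_eventually[OF lim2 ev] unfolding val .
  show ?thesis
  proof (intro conjI ballI)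
    show "f r integrable_on {0..1}" if "r \<in> {0..<1}" for r using F[OF that] by blast
    show "(\<lambda>r. integral {0..1} (f r) / of_real r) integrable_on {0..t}" if "t \<in> {0<..<1}" for t
      using I[OF that] unfolding g_def by blast
    show "((\<lambda>t. 2 / (2 * of_real pi * \<i>) ^ (m + n + 1)
            * integral {0..t} (\<lambda>r. integral {0..1} (f r) / of_real r))
        \<longlongrightarrow> - ((-1) ^ n / of_nat (fact (m + n + 1)))
             * of_real (bernpoly (m + n + 1) (\<alpha> - \<beta> + heaviside (\<beta> - \<alpha>)))) (at_left 1)"
      using lim unfolding N_def g_def y_def h_def .
  qed
qed


end
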